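(* Let $(X,\Sigma)$ be a measurable space, $p$ a transition function on it with associated operator $A$ on $ba(X,\Sigma)$, and let $K=\{\mu_1,\dots,\mu_m\}$ be a finitely additive cycle of measures of $A$. If at least one cyclic measure $\mu_i$ is purely finitely additive, then all cyclic measures $\mu_1,\dots,\mu_m$ and the mean measure $\frac1m\sum_{k=1}^m\mu_k$ are purely finitely additive.
   Context: $X$ is an arbitrary infinite set and $\Sigma$ a $\sigma$-algebra of subsets of $X$ containing all one-point sets. $ba(X,\Sigma)$ denotes the space of bounded finitely additive real-valued measures on $\Sigma$. A nonnegative finitely additive measure $\mu$ is purely finitely additive if every countably additive measure $\lambda$ with $0\le\lambda\le\mu$ is identically zero. A transition function is a map $p(x,E)$ with $0\le p(x,E)\le 1$, $p(x,X)=1$, $p(\cdot,E)$ bounded $\Sigma$-measurable for every $E\in\Sigma$, and $p(x,\cdot)$ countably additive for every $x\in X$. The Markov operator is $A\mu(E)=\int_X p(x,E)\,\mu(dx)$. A cycle of measures of $A$ is a finite numbered set $\{\mu_1,\dots,\mu_m\}$ of pairwise different positive finitely additive measures with $A\mu_i=\mu_{i+1}$ ($1\le i\le m-1$) and $A\mu_m=\mu_1$; its mean measure is $\frac1m\sum_{k=1}^m\mu_k$. *)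

theory Defs
  imports "HOL-Analysis.Analysis"
begin

definition std_space :: "'a measure \<Rightarrow> bool" where
  "std_space M \<longleftrightarrow> infinite (space M) \<and> (\<forall>x\<in>space M. {x} \<in> sets M)"

definition fa_measure :: "'a measure \<Rightarrow> ('a set \<Rightarrow> real) \<Rightarrow> bool" where
  "fa_measure M \<mu> \<longleftrightarrow> \<mu> {} = 0
     \<and> (\<forall>A\<in>sets M. \<forall>B\<in>sets M. A \<inter> B = {} \<longrightarrow> \<mu> (A \<union> B) = \<mu> A + \<mu> B)
     \<and> (\<exists>C. \<forall>A\<in>sets M. \<bar>\<mu> A\<bar> \<le> C)"

definition pos_fa_measure :: "'a measure \<Rightarrow> ('a set \<Rightarrow> real) \<Rightarrow> bool" where
  "pos_fa_measure M \<mu> \<longleftrightarrow> fa_measure M \<mu> \<and> (\<forall>A\<in>sets M. 0 \<le> \<mu> A)"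

definition ca_on :: "'a measure \<Rightarrow> ('a set \<Rightarrow> real) \<Rightarrow> bool" where
  "ca_on M \<mu> \<longleftrightarrow> (\<forall>F::nat \<Rightarrow> 'a set. range F \<subseteq> sets M \<longrightarrow> disjoint_family F \<longrightarrow>
      (\<lambda>n. \<mu> (F n)) sums \<mu> (\<Union>n. F n))"

definition pure_fa :: "'a measure \<Rightarrow> ('a set \<Rightarrow> real) \<Rightarrow> bool" where
  "pure_fa M \<mu> \<longleftrightarrow> pos_fa_measure M \<mu> \<and>
     (\<forall>\<nu>. fa_measure M \<nu> \<and> ca_on M \<nu> \<and> (\<forall>A\<in>sets M. 0 \<le> \<nu> A \<and> \<nu> A \<le> \<mu> A)
          \<longrightarrow> (\<forall>A\<in>sets M. \<nu> A = 0))"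

definition transition_function :: "'a measure \<Rightarrow> ('a \<Rightarrow> 'a set \<Rightarrow> real) \<Rightarrow> bool" where
  "transition_function M p \<longleftrightarrow>
     (\<forall>x\<in>space M. \<forall>E\<in>sets M. 0 \<le> p x E \<and> p x E \<le> 1)
   \<and> (\<forall>x\<in>space M. p x (space M) = 1)
   \<and> (\<forall>E\<in>sets M. (\<lambda>x. p x E) \<in> borel_measurable M)
   \<and> (\<forall>x\<in>space M. p x {} = 0 \<and> ca_on M (p x))"

definition fa_integral :: "'a measure \<Rightarrow> ('a set \<Rightarrow> real) \<Rightarrow> ('a \<Rightarrow> real) \<Rightarrow> real" where
  "fa_integral M \<mu> f = (SUP P \<in> {P. finite P \<and> P \<subseteq> sets M \<and> disjoint P \<and> \<Union>P = space M}.
      (\<Sum>B\<in>P. (INF x\<in>B. f x) * \<mu> B))"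

definition markov_op :: "'a measure \<Rightarrow> ('a \<Rightarrow> 'a set \<Rightarrow> real) \<Rightarrow> ('a set \<Rightarrow> real) \<Rightarrow> ('a set \<Rightarrow> real)" where
  "markov_op M p \<mu> = (\<lambda>E. fa_integral M \<mu> (\<lambda>x. p x E))"

definition is_cycle :: "'a measure \<Rightarrow> ('a \<Rightarrow> 'a set \<Rightarrow> real) \<Rightarrow> nat \<Rightarrow> (nat \<Rightarrow> 'a set \<Rightarrow> real) \<Rightarrow> bool" where
  "is_cycle M p m \<mu> \<longleftrightarrow> 1 \<le> m
     \<and> (\<forall>i\<in>{1..m}. pos_fa_measure M (\<mu> i))
     \<and> (\<forall>i\<in>{1..m}. \<forall>j\<in>{1..m}. i \<noteq> j \<longrightarrow> (\<exists>E\<in>sets M. \<mu> i E \<noteq> \<mu> j E))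
     \<and> (\<forall>i\<in>{1..<m}. \<forall>E\<in>sets M. markov_op M p (\<mu> i) E = \<mu> (Suc i) E)
     \<and> (\<forall>E\<in>sets M. markov_op M p (\<mu> m) E = \<mu> 1 E)"

definition mean_measure :: "nat \<Rightarrow> (nat \<Rightarrow> 'a set \<Rightarrow> real) \<Rightarrow> 'a set \<Rightarrow> real" where
  "mean_measure m \<mu> = (\<lambda>E. (1 / real m) * (\<Sum>k=1..m. \<mu> k E))"

end

theory Submission
  imports Defs
begin

lemma fa_add: "fa_measure M \<mu> \<Longrightarrow> A \<in> sets M \<Longrightarrow> B \<in> sets M \<Longrightarrow> A \<inter> B = {} \<Longrightarrow> \<mu> (A \<union> B) = \<mu> A + \<mu> B"
  by (simp add: fa_measure_def)

lemma fa_empty: "fa_measure M \<mu> \<Longrightarrow> \<mu> {} = 0"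
  by (simp add: fa_measure_def)

lemma fa_diff: "fa_measure M \<mu> \<Longrightarrow> A \<in> sets M \<Longrightarrow> B \<in> sets M \<Longrightarrow> B \<subseteq> A \<Longrightarrow> \<mu> A = \<mu> B + \<mu> (A - B)"
proof -
  assume a: "fa_measure M \<mu>" "A \<in> sets M" "B \<in> sets M" "B \<subseteq> A"
  have "B \<union> (A - B) = A" using a(4) by auto
  then show ?thesis using fa_add[of M \<mu> B "A - B"] a by auto
qed

lemma fa_mono: "fa_measure M \<mu> \<Longrightarrow> \<forall>A\<in>sets M. 0 \<le> \<mu> A \<Longrightarrow> A \<in> sets M \<Longrightarrow> B \<in> sets M \<Longrightarrow> B \<subseteq> A \<Longrightarrow> \<mu> B \<le> \<mu> A"
  using fa_diff[of M \<mu> A B] by auto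

lemma fa_lessThan:
  fixes F :: "nat \<Rightarrow> 'a set" and n :: nat
  assumes "fa_measure M \<mu>" "range F \<subseteq> sets M" "disjoint_family F"
  shows "\<mu> (\<Union>i<n. F i) = (\<Sum>i<n. \<mu> (F i))"
proof (induction n)
  case 0 then show ?case using fa_empty[OF assms(1)] by simp
next
  case (Suc n)
  have d: "(\<Union>i<n. F i) \<inter> F n = {}"
    using assms(3) unfolding disjoint_family_on_def by (auto; metis disjoint_iff less_irrefl)
  have "(\<Union>i<Suc n. F i) = (\<Union>i<n. F i) \<union> F n" by (auto simp: lessThan_Suc)
  moreover have "(\<Union>i<n. F i) \<in> sets M" using assms(2) by auto
  ultimately show ?case using fa_add[OF assms(1) _ _ d] assms(2) Suc by auto
qed

lemma fa_finite_partition: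
  assumes "fa_measure M \<mu>" "finite P" "P \<subseteq> sets M" "disjoint P"
  shows "sum \<mu> P = \<mu> (\<Union>P)"
  using assms(2-4)
proof (induction P rule: finite_induct)
  case empty then show ?case using fa_empty[OF assms(1)] by simp
next
  case (insert S P)
  have dP: "disjoint P" using insert.prems(2) by (simp add: pairwise_insert)
  have d: "S \<inter> \<Union>P = {}" using insert.prems(2) insert.hyps(2)
    by (auto simp: pairwise_insert disjnt_def)
  have "\<Union>P \<in> sets M" using insert.prems(1) insert.hyps(1) by (intro sets.finite_Union) auto
  then show ?case using fa_add[OF assms(1) _ _ d] insert dP by auto
qed

lemma dominated_ca:
  assumes fa1: "fa_measure M \<nu>1" and nn1: "\<forall>A\<in>sets M. 0 \<le> \<nu>1 A"
    and fa: "fa_measure M \<nu>" and ca: "ca_on M \<nu>"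
    and le: "\<forall>A\<in>sets M. \<nu>1 A \<le> \<nu> A"
  shows "ca_on M \<nu>1"
  unfolding ca_on_def
proof (intro allI impI)
  fix F :: "nat \<Rightarrow> 'a set"
  assume F: "range F \<subseteq> sets M" and dF: "disjoint_family F"
  define U where "U = (\<Union>n. F n)"
  have U: "U \<in> sets M" using F unfolding U_def by auto
  define V where "V n = (\<Union>i<n. F i)" for n
  have V: "V n \<in> sets M" for n using F unfolding V_def by auto
  have VU: "V n \<subseteq> U" for n unfolding V_def U_def by auto
  have s: "(\<lambda>n. \<nu> (F n)) sums \<nu> U" using ca F dF unfolding ca_on_def U_def by auto
  have t: "(\<lambda>n. \<nu> U - \<nu> (V n)) \<longlonglongrightarrow> 0"
  proof -
    have "(\<lambda>n. \<nu> (V n)) \<longlonglongrightarrow> \<nu> U"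
      using s unfolding sums_def V_def fa_lessThan[OF fa F dF] .
    then have "(\<lambda>n. \<nu> U - \<nu> (V n)) \<longlonglongrightarrow> \<nu> U - \<nu> U" by (intro tendsto_intros)
    then show ?thesis by simp
  qed
  have b1: "0 \<le> \<nu>1 U - \<nu>1 (V n)" for n
    using fa_diff[OF fa1 U V VU, of n] nn1 U V by (auto simp: sets.Diff)
  have b2: "\<nu>1 U - \<nu>1 (V n) \<le> \<nu> U - \<nu> (V n)" for n
    using fa_diff[OF fa1 U V VU, of n] fa_diff[OF fa U V VU, of n] le U V by (auto simp: sets.Diff)
  have "(\<lambda>n. \<nu>1 U - \<nu>1 (V n)) \<longlonglongrightarrow> 0"
    by (rule real_tendsto_sandwich[OF _ _ tendsto_const t]) (use b1 b2 in auto)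
  then have "(\<lambda>n. \<nu>1 U - (\<nu>1 U - \<nu>1 (V n))) \<longlonglongrightarrow> \<nu>1 U - 0" by (intro tendsto_intros)
  then have "(\<lambda>n. \<nu>1 (V n)) \<longlonglongrightarrow> \<nu>1 U" by simp
  then show "(\<lambda>n. \<nu>1 (F n)) sums \<nu>1 (\<Union>n. F n)"
    unfolding sums_def U_def V_def fa_lessThan[OF fa1 F dF, symmetric] .
qed


lemma pure_zero: "pure_fa M (\<lambda>E. 0)"
  unfolding pure_fa_def pos_fa_measure_def fa_measure_def
  by (auto intro: order_antisym)

lemma pure_scale:
  assumes "pure_fa M \<mu>" "c > 0"
  shows "pure_fa M (\<lambda>E. c * \<mu> E)"
proof -
  have pf: "pos_fa_measure M \<mu>" and pr: "\<And>\<nu>. fa_measure M \<nu> \<Longrightarrow> ca_on M \<nu> \<Longrightarrow> (\<forall>A\<in>sets M. 0 \<le> \<nu> A \<and> \<nu> A \<le> \<mu> A) \<Longrightarrow> (\<forall>A\<in>sets M. \<nu> A = 0)"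
    using assms(1) unfolding pure_fa_def by auto
  from pf obtain C where C: "\<forall>A\<in>sets M. \<bar>\<mu> A\<bar> \<le> C" unfolding pos_fa_measure_def fa_measure_def by auto
  have "pos_fa_measure M (\<lambda>E. c * \<mu> E)"
    using pf assms(2) unfolding pos_fa_measure_def fa_measure_def
  proof (intro conjI)
    show "\<exists>C. \<forall>A\<in>sets M. \<bar>c * \<mu> A\<bar> \<le> C"
      using C assms(2) by (intro exI[of _ "c * C"]) (auto simp: abs_mult intro: mult_left_mono)
  qed (auto simp: distrib_left)
  moreover have "\<forall>A\<in>sets M. \<nu> A = 0" if "fa_measure M \<nu>" "ca_on M \<nu>" "\<forall>A\<in>sets M. 0 \<le> \<nu> A \<and> \<nu> A \<le> c * \<mu> A" for \<nu>
  proof -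
    have "fa_measure M (\<lambda>E. \<nu> E / c)"
      using that(1) unfolding fa_measure_def
    proof (intro conjI)
      from that(1) obtain D where "\<forall>A\<in>sets M. \<bar>\<nu> A\<bar> \<le> D" unfolding fa_measure_def by auto
      then show "\<exists>C. \<forall>A\<in>sets M. \<bar>\<nu> A / c\<bar> \<le> C" using assms(2)
        by (intro exI[of _ "D / c"]) (auto simp: divide_right_mono)
    qed (auto simp: add_divide_distrib)
    moreover have "ca_on M (\<lambda>E. \<nu> E / c)"
      using that(2) unfolding ca_on_def by (auto intro: sums_divide)
    moreover have "\<forall>A\<in>sets M. 0 \<le> \<nu> A / c \<and> \<nu> A / c \<le> \<mu> A"
      using that(3) assms(2) by (auto simp: pos_divide_le_eq mult.commute)
    ultimately have "\<forall>A\<in>sets M. \<nu> A / c = 0" by (rule pr)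
    then show ?thesis using assms(2) by auto
  qed
  ultimately show ?thesis unfolding pure_fa_def by blast
qed

lemma pure_add:
  assumes p1: "pure_fa M \<mu>1" and p2: "pure_fa M \<mu>2"
  shows "pure_fa M (\<lambda>E. \<mu>1 E + \<mu>2 E)"
proof -
  have pf1: "pos_fa_measure M \<mu>1" and pr1: "\<And>\<nu>. fa_measure M \<nu> \<Longrightarrow> ca_on M \<nu> \<Longrightarrow> (\<forall>A\<in>sets M. 0 \<le> \<nu> A \<and> \<nu> A \<le> \<mu>1 A) \<Longrightarrow> (\<forall>A\<in>sets M. \<nu> A = 0)"
    using p1 unfolding pure_fa_def by auto
  have pf2: "pos_fa_measure M \<mu>2" and pr2: "\<And>\<nu>. fa_measure M \<nu> \<Longrightarrow> ca_on M \<nu> \<Longrightarrow> (\<forall>A\<in>sets M. 0 \<le> \<nu> A \<and> \<nu> A \<le> \<mu>2 A) \<Longrightarrow> (\<forall>A\<in>sets M. \<nu> A = 0)"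
    using p2 unfolding pure_fa_def by auto
  have fa1: "fa_measure M \<mu>1" and nn1: "\<forall>A\<in>sets M. 0 \<le> \<mu>1 A" using pf1 unfolding pos_fa_measure_def by auto
  have fa2: "fa_measure M \<mu>2" and nn2: "\<forall>A\<in>sets M. 0 \<le> \<mu>2 A" using pf2 unfolding pos_fa_measure_def by auto
  from fa1 obtain C1 where C1: "\<forall>A\<in>sets M. \<bar>\<mu>1 A\<bar> \<le> C1" unfolding fa_measure_def by auto
  from fa2 obtain C2 where C2: "\<forall>A\<in>sets M. \<bar>\<mu>2 A\<bar> \<le> C2" unfolding fa_measure_def by auto
  have "pos_fa_measure M (\<lambda>E. \<mu>1 E + \<mu>2 E)"
    unfolding pos_fa_measure_def fa_measure_def
  proof (intro conjI)
    show "\<exists>C. \<forall>A\<in>sets M. \<bar>\<mu>1 A + \<mu>2 A\<bar> \<le> C"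
      using C1 C2 by (intro exI[of _ "C1 + C2"]) (auto intro: order_trans[OF abs_triangle_ineq] add_mono)
  qed (use fa1 fa2 nn1 nn2 in \<open>auto simp: fa_empty fa_add\<close>)
  moreover have "\<forall>A\<in>sets M. \<nu> A = 0" if fan: "fa_measure M \<nu>" and can: "ca_on M \<nu>"
    and le: "\<forall>A\<in>sets M. 0 \<le> \<nu> A \<and> \<nu> A \<le> \<mu>1 A + \<mu>2 A" for \<nu>
  proof -
    define I where "I E = {F \<in> sets M. F \<subseteq> E}" for E
    define g where "g E F = \<nu> F + \<mu>1 (E - F)" for E F
    define \<nu>1 where "\<nu>1 E = (INF F\<in>I E. g E F)" for E
    have Ine: "I E \<noteq> {}" for E unfolding I_def by auto
    have gnn: "0 \<le> g E F" if "E \<in> sets M" "F \<in> I E" for E F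
      using that le nn1 unfolding I_def g_def by (auto intro!: add_nonneg_nonneg)
    have bdd: "bdd_below (g E ` I E)" if "E \<in> sets M" for E
      using gnn[OF that] by (intro bdd_belowI[where m=0]) auto
    have \<nu>1_nn: "0 \<le> \<nu>1 E" if "E \<in> sets M" for E
      unfolding \<nu>1_def using gnn[OF that] Ine by (intro cINF_greatest) auto
    have \<nu>1_le: "\<nu>1 E \<le> \<nu> E" if "E \<in> sets M" for E
    proof -
      have "E \<in> I E" using that unfolding I_def by auto
      moreover have "g E E = \<nu> E" unfolding g_def using fa1 by (simp add: fa_empty)
      ultimately show ?thesis unfolding \<nu>1_def by (metis bdd[OF that] cINF_lower)
    qed
    have \<nu>1_le1: "\<nu>1 E \<le> \<mu>1 E" if "E \<in> sets M" for E
    proof -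
      have "{} \<in> I E" unfolding I_def by auto
      moreover have "g E {} = \<mu>1 E" unfolding g_def using fan by (simp add: fa_empty)
      ultimately show ?thesis unfolding \<nu>1_def by (metis bdd[OF that] cINF_lower)
    qed
    have \<nu>1_add: "\<nu>1 (E1 \<union> E2) = \<nu>1 E1 + \<nu>1 E2"
      if E1: "E1 \<in> sets M" and E2: "E2 \<in> sets M" and d: "E1 \<inter> E2 = {}" for E1 E2
    proof -
      have E: "E1 \<union> E2 \<in> sets M" using E1 E2 by auto
      have split: "g (E1 \<union> E2) F = g E1 (F \<inter> E1) + g E2 (F \<inter> E2)" if "F \<in> I (E1 \<union> E2)" for F
      proof -
        have F: "F \<in> sets M" "F \<subseteq> E1 \<union> E2" using that unfolding I_def by auto
        have "F = (F \<inter> E1) \<union> (F \<inter> E2)" using F by auto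
        then have a: "\<nu> F = \<nu> (F \<inter> E1) + \<nu> (F \<inter> E2)"
          using fa_add[OF fan, of "F \<inter> E1" "F \<inter> E2"] F E1 E2 d by auto
        have "E1 \<union> E2 - F = (E1 - F) \<union> (E2 - F)" by auto
        then have b: "\<mu>1 (E1 \<union> E2 - F) = \<mu>1 (E1 - F) + \<mu>1 (E2 - F)"
          using fa_add[OF fa1, of "E1 - F" "E2 - F"] F E1 E2 d by auto
        have "E1 - F \<inter> E1 = E1 - F" "E2 - F \<inter> E2 = E2 - F" by auto
        then show ?thesis unfolding g_def using a b by simp
      qed
      have ge: "\<nu>1 E1 + \<nu>1 E2 \<le> \<nu>1 (E1 \<union> E2)"
        unfolding \<nu>1_def[of "E1 \<union> E2"]
      proof (rule cINF_greatest[OF Ine])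
        fix F assume F: "F \<in> I (E1 \<union> E2)"
        have "F \<inter> E1 \<in> I E1" "F \<inter> E2 \<in> I E2" using F E1 E2 unfolding I_def by auto
        then have "\<nu>1 E1 \<le> g E1 (F \<inter> E1)" "\<nu>1 E2 \<le> g E2 (F \<inter> E2)"
          unfolding \<nu>1_def using cINF_lower[OF bdd[OF E1]] cINF_lower[OF bdd[OF E2]] by auto
        then show "\<nu>1 E1 + \<nu>1 E2 \<le> g (E1 \<union> E2) F" using split[OF F] by simp
      qed
      have comb: "\<nu>1 (E1 \<union> E2) \<le> g E1 F1 + g E2 F2" if F1: "F1 \<in> I E1" and F2: "F2 \<in> I E2" for F1 F2
      proof -
        have FI: "F1 \<union> F2 \<in> I (E1 \<union> E2)" using F1 F2 unfolding I_def by auto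
        have "(F1 \<union> F2) \<inter> E1 = F1" "(F1 \<union> F2) \<inter> E2 = F2" using F1 F2 d unfolding I_def by auto
        then have "g (E1 \<union> E2) (F1 \<union> F2) = g E1 F1 + g E2 F2" using split[OF FI] by simp
        moreover have "\<nu>1 (E1 \<union> E2) \<le> g (E1 \<union> E2) (F1 \<union> F2)"
          unfolding \<nu>1_def by (rule cINF_lower[OF bdd[OF E] FI])
        ultimately show ?thesis by simp
      qed
      have "\<nu>1 (E1 \<union> E2) - g E2 F2 \<le> \<nu>1 E1" if F2: "F2 \<in> I E2" for F2
        unfolding \<nu>1_def[of E1] using comb[OF _ F2] by (intro cINF_greatest[OF Ine]) (auto simp: algebra_simps)
      then have "g E2 F2 \<ge> \<nu>1 (E1 \<union> E2) - \<nu>1 E1" if F2: "F2 \<in> I E2" for F2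
        using that by force
      then have "\<nu>1 (E1 \<union> E2) - \<nu>1 E1 \<le> \<nu>1 E2"
        unfolding \<nu>1_def[of E2] by (intro cINF_greatest[OF Ine]) auto
      then show ?thesis using ge by simp
    qed
    have \<nu>1_empty: "\<nu>1 {} = 0" using \<nu>1_nn[of "{}"] \<nu>1_le[of "{}"] fa_empty[OF fan] by auto
    from fan obtain D where D: "\<forall>A\<in>sets M. \<bar>\<nu> A\<bar> \<le> D" unfolding fa_measure_def by auto
    have fa\<nu>1: "fa_measure M \<nu>1"
      unfolding fa_measure_def
    proof (intro conjI)
      show "\<exists>C. \<forall>A\<in>sets M. \<bar>\<nu>1 A\<bar> \<le> C"
        using D \<nu>1_nn \<nu>1_le by (intro exI[of _ D]) force
    qed (use \<nu>1_empty \<nu>1_add in auto)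
    have ca\<nu>1: "ca_on M \<nu>1"
      by (rule dominated_ca[OF fa\<nu>1 _ fan can]) (use \<nu>1_nn \<nu>1_le in auto)
    have z: "\<forall>A\<in>sets M. \<nu>1 A = 0"
      by (rule pr1[OF fa\<nu>1 ca\<nu>1]) (use \<nu>1_nn \<nu>1_le1 in auto)
    have "\<nu> E \<le> \<mu>2 E" if E: "E \<in> sets M" for E
    proof (rule field_le_epsilon)
      fix e :: real assume e: "0 < e"
      have "\<nu>1 E < e" using z E e by auto
      then obtain F where F: "F \<in> I E" and gF: "g E F < e"
        unfolding \<nu>1_def using Ine by (metis cINF_less_iff bdd[OF E])
      have Fs: "F \<in> sets M" "F \<subseteq> E" using F unfolding I_def by auto
      have EF: "E - F \<in> sets M" using Fs E by auto
      have "\<nu> E = \<nu> F + \<nu> (E - F)" by (rule fa_diff[OF fan E Fs])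
      also have "\<dots> \<le> \<nu> F + \<mu>1 (E - F) + \<mu>2 (E - F)" using le EF by auto
      also have "\<dots> < e + \<mu>2 (E - F)" using gF unfolding g_def by simp
      also have "\<dots> \<le> e + \<mu>2 E" using fa_mono[OF fa2 nn2 E EF] by auto
      finally show "\<nu> E \<le> \<mu>2 E + e" by simp
    qed
    then show ?thesis by (intro pr2[OF fan can]) (use le in auto)
  qed
  ultimately show ?thesis unfolding pure_fa_def by blast
qed

lemma pure_sum:
  fixes n :: nat
  assumes "\<forall>k\<in>{1..n}. pure_fa M (\<mu> k)"
  shows "pure_fa M (\<lambda>E. \<Sum>k=1..n. \<mu> k E)"
  using assms
proof (induction n)
  case 0 then show ?case using pure_zero by simp
next
  case (Suc n)
  then have "pure_fa M (\<lambda>E. (\<Sum>k=1..n. \<mu> k E) + \<mu> (Suc n) E)"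
    by (intro pure_add) auto
  then show ?case by simp
qed


definition dparts :: "'a measure \<Rightarrow> 'a set set set" where
  "dparts M = {P. finite P \<and> P \<subseteq> sets M \<and> disjoint P \<and> \<Union>P = space M}"

lemma fa_integral_dparts: "fa_integral M \<mu> f = (SUP P \<in> dparts M. (\<Sum>B\<in>P. (INF x\<in>B. f x) * \<mu> B))"
  unfolding fa_integral_def dparts_def ..

lemma dparts_ne: "{space M} \<in> dparts M"
  unfolding dparts_def by (auto simp: pairwise_def)

lemma INF_01:
  assumes "B \<in> sets M" "B \<noteq> {}" "\<forall>x\<in>space M. 0 \<le> f x \<and> f x \<le> (1::real)"
  shows "0 \<le> (INF x\<in>B. f x)" "(INF x\<in>B. f x) \<le> 1"
proof -
  have Bs: "B \<subseteq> space M" using assms(1) sets.sets_into_space by auto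
  show "0 \<le> (INF x\<in>B. f x)" using assms Bs by (intro cINF_greatest) auto
  obtain y where y: "y \<in> B" using assms(2) by auto
  have "bdd_below (f ` B)" using assms Bs by (intro bdd_belowI[where m=0]) auto
  then have "(INF x\<in>B. f x) \<le> f y" using y by (rule cINF_lower)
  then show "(INF x\<in>B. f x) \<le> 1" using y Bs assms(3) by force
qed

lemma term_bounds:
  assumes "pos_fa_measure M \<mu>" "B \<in> sets M" "\<forall>x\<in>space M. 0 \<le> f x \<and> f x \<le> (1::real)"
  shows "0 \<le> (INF x\<in>B. f x) * \<mu> B" "(INF x\<in>B. f x) * \<mu> B \<le> \<mu> B"
proof -
  have fa: "fa_measure M \<mu>" and nn: "0 \<le> \<mu> B" using assms unfolding pos_fa_measure_def by auto
  show "0 \<le> (INF x\<in>B. f x) * \<mu> B"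
  proof (cases "B = {}")
    case True then show ?thesis using fa_empty[OF fa] by simp
  next
    case False then show ?thesis using INF_01[OF assms(2) False assms(3)] nn by simp
  qed
  show "(INF x\<in>B. f x) * \<mu> B \<le> \<mu> B"
  proof (cases "B = {}")
    case True then show ?thesis using fa_empty[OF fa] by simp
  next
    case False then show ?thesis using INF_01[OF assms(2) False assms(3)] nn
      by (simp add: mult_left_le_one_le)
  qed
qed

lemma sum_bdd:
  assumes "pos_fa_measure M \<mu>" "P \<in> dparts M" "\<forall>x\<in>space M. 0 \<le> f x \<and> f x \<le> (1::real)"
  shows "(\<Sum>B\<in>P. (INF x\<in>B. f x) * \<mu> B) \<le> \<mu> (space M)"
proof -
  have P: "finite P" "P \<subseteq> sets M" "disjoint P" "\<Union>P = space M" using assms(2) unfolding dparts_def by auto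
  have fa: "fa_measure M \<mu>" using assms(1) unfolding pos_fa_measure_def by auto
  have "(\<Sum>B\<in>P. (INF x\<in>B. f x) * \<mu> B) \<le> (\<Sum>B\<in>P. \<mu> B)"
    using term_bounds(2)[OF assms(1) _ assms(3)] P by (intro sum_mono) auto
  also have "\<dots> = \<mu> (space M)" using fa_finite_partition[OF fa P(1-3)] P(4) by simp
  finally show ?thesis .
qed

lemma fa_integral_mono:
  assumes p\<nu>: "pos_fa_measure M \<nu>" and p\<mu>: "pos_fa_measure M \<mu>"
    and le: "\<forall>A\<in>sets M. \<nu> A \<le> \<mu> A" and f: "\<forall>x\<in>space M. 0 \<le> f x \<and> f x \<le> (1::real)"
  shows "fa_integral M \<nu> f \<le> fa_integral M \<mu> f"
  unfolding fa_integral_dparts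
proof (rule cSUP_mono)
  show "dparts M \<noteq> {}" using dparts_ne by auto
  show "bdd_above ((\<lambda>P. \<Sum>B\<in>P. (INF x\<in>B. f x) * \<mu> B) ` dparts M)"
    using sum_bdd[OF p\<mu> _ f] by (intro bdd_aboveI[where M="\<mu> (space M)"]) auto
  fix P assume P: "P \<in> dparts M"
  have Ps: "P \<subseteq> sets M" using P unfolding dparts_def by auto
  have fa\<nu>: "fa_measure M \<nu>" "fa_measure M \<mu>" using p\<nu> p\<mu> unfolding pos_fa_measure_def by auto
  have "(\<Sum>B\<in>P. (INF x\<in>B. f x) * \<nu> B) \<le> (\<Sum>B\<in>P. (INF x\<in>B. f x) * \<mu> B)"
  proof (rule sum_mono)
    fix B assume B: "B \<in> P"
    show "(INF x\<in>B. f x) * \<nu> B \<le> (INF x\<in>B. f x) * \<mu> B"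
    proof (cases "B = {}")
      case True then show ?thesis using fa_empty[OF fa\<nu>(1)] fa_empty[OF fa\<nu>(2)] by simp
    next
      case False then show ?thesis using INF_01(1)[OF _ False f] B Ps le
        by (intro mult_left_mono) auto
    qed
  qed
  then show "\<exists>m\<in>dparts M. (\<Sum>B\<in>P. (INF x\<in>B. f x) * \<nu> B) \<le> (\<Sum>B\<in>m. (INF x\<in>B. f x) * \<mu> B)"
    using P by blast
qed

definition ca_meas :: "'a measure \<Rightarrow> ('a set \<Rightarrow> real) \<Rightarrow> 'a measure" where
  "ca_meas M \<nu> = measure_of (space M) (sets M) (\<lambda>A. ennreal (\<nu> A))"

lemma ca_meas:
  assumes p: "pos_fa_measure M \<nu>" and ca: "ca_on M \<nu>"
  shows "sets (ca_meas M \<nu>) = sets M" "space (ca_meas M \<nu>) = space M"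
    "\<And>A. A \<in> sets M \<Longrightarrow> emeasure (ca_meas M \<nu>) A = ennreal (\<nu> A)"
    "\<And>A. A \<in> sets M \<Longrightarrow> measure (ca_meas M \<nu>) A = \<nu> A"
    "finite_measure (ca_meas M \<nu>)"
proof -
  have fa: "fa_measure M \<nu>" and nn: "\<forall>A\<in>sets M. 0 \<le> \<nu> A" using p unfolding pos_fa_measure_def by auto
  show S: "sets (ca_meas M \<nu>) = sets M" unfolding ca_meas_def by simp
  show Sp: "space (ca_meas M \<nu>) = space M" unfolding ca_meas_def by simp
  have pos: "positive (sets M) (\<lambda>A. ennreal (\<nu> A))"
    unfolding positive_def using fa_empty[OF fa] by simp
  have cadd: "countably_additive (sets M) (\<lambda>A. ennreal (\<nu> A))"
    unfolding countably_additive_def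
  proof (intro allI impI)
    fix F :: "nat \<Rightarrow> 'a set" assume F: "range F \<subseteq> sets M" "disjoint_family F" "\<Union> (range F) \<in> sets M"
    have s: "(\<lambda>n. \<nu> (F n)) sums \<nu> (\<Union>n. F n)" using ca F unfolding ca_on_def by auto
    have "(\<Sum>i. ennreal (\<nu> (F i))) = ennreal (\<Sum>i. \<nu> (F i))"
      using F nn s by (intro suminf_ennreal2) (auto simp: sums_summable)
    also have "(\<Sum>i. \<nu> (F i)) = \<nu> (\<Union>n. F n)" using s by (simp add: sums_iff)
    finally show "(\<Sum>i. ennreal (\<nu> (F i))) = ennreal (\<nu> (\<Union> (range F)))" by simp
  qed
  show E: "\<And>A. A \<in> sets M \<Longrightarrow> emeasure (ca_meas M \<nu>) A = ennreal (\<nu> A)"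
    unfolding ca_meas_def by (rule emeasure_measure_of_sigma[OF sets.sigma_algebra_axioms pos cadd])
  show "\<And>A. A \<in> sets M \<Longrightarrow> measure (ca_meas M \<nu>) A = \<nu> A"
    using E nn by (simp add: measure_def)
  show "finite_measure (ca_meas M \<nu>)"
    by (rule finite_measureI) (simp add: Sp E)
qed


lemma darboux_eq:
  assumes p: "pos_fa_measure M \<nu>" and ca: "ca_on M \<nu>"
    and fm: "f \<in> borel_measurable M" and f01: "\<forall>x\<in>space M. 0 \<le> f x \<and> f x \<le> (1::real)"
  shows "fa_integral M \<nu> f = integral\<^sup>L (ca_meas M \<nu>) f"
proof -
  define N where "N = ca_meas M \<nu>"
  note Nprops = ca_meas[OF p ca, folded N_def]
  interpret finite_measure N by (rule Nprops(5))
  have fN[measurable]: "f \<in> borel_measurable N"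
    by (subst measurable_cong_sets[OF Nprops(1) refl]) (rule fm)
  have intf: "integrable N f"
    using f01 Nprops(2) by (intro integrable_const_bound[where B=1]) auto
  define c where "c B = (INF x\<in>B. f x)" for B
  define g where "g P x = (\<Sum>B\<in>P. c B * indicator B x)" for P x
  have intB: "integrable N (\<lambda>x. c B * indicator B x)" if "B \<in> sets M" for B
  proof -
    have [measurable]: "B \<in> sets N" using that Nprops(1) by simp
    show ?thesis by (intro integrable_const_bound[where B="\<bar>c B\<bar>"]) (auto simp: indicator_def)
  qed
  have gint: "integrable N (g P)" if "P \<in> dparts M" for P
    using that intB unfolding g_def dparts_def by (intro Bochner_Integration.integrable_sum) auto
  have geq: "(\<Sum>B\<in>P. c B * \<nu> B) = integral\<^sup>L N (g P)" if "P \<in> dparts M" for P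
  proof -
    have Ps: "P \<subseteq> sets M" using that unfolding dparts_def by auto
    have "integral\<^sup>L N (g P) = (\<Sum>B\<in>P. integral\<^sup>L N (\<lambda>x. c B * indicator B x))"
      unfolding g_def using Ps intB by (intro Bochner_Integration.integral_sum) auto
    also have "\<dots> = (\<Sum>B\<in>P. c B * \<nu> B)"
    proof (rule sum.cong[OF refl])
      fix B assume B: "B \<in> P"
      then have "B \<inter> space N = B" using Ps Nprops(2) sets.sets_into_space[of B M] by auto
      then show "integral\<^sup>L N (\<lambda>x. c B * indicator B x) = c B * \<nu> B"
        using Nprops(4) B Ps by auto
    qed
    finally show ?thesis by simp
  qed
  have gpt: "g P x = c S" if P: "P \<in> dparts M" and S: "S \<in> P" and x: "x \<in> S" for P S x
  proof -
    have Pf: "finite P" "disjoint P" using P unfolding dparts_def by auto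
    have "g P x = c S * indicator S x + (\<Sum>B\<in>P - {S}. c B * indicator B x)"
      unfolding g_def using sum.remove[OF Pf(1) S] by simp
    also have "(\<Sum>B\<in>P - {S}. c B * indicator B x) = 0"
    proof (rule sum.neutral, intro ballI)
      fix B assume "B \<in> P - {S}"
      then have "x \<notin> B" using Pf(2) S x unfolding pairwise_def disjnt_def by blast
      then show "c B * indicator B x = 0" by simp
    qed
    finally show ?thesis using x by simp
  qed
  have cov: "\<exists>S\<in>P. x \<in> S" if "P \<in> dparts M" "x \<in> space M" for P x
    using that unfolding dparts_def by auto
  have le: "(\<Sum>B\<in>P. c B * \<nu> B) \<le> integral\<^sup>L N f" if P: "P \<in> dparts M" for P
  proof -
    have "integral\<^sup>L N (g P) \<le> integral\<^sup>L N f"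
    proof (rule integral_mono[OF gint[OF P] intf])
      fix x assume "x \<in> space N"
      then have x: "x \<in> space M" using Nprops(2) by simp
      then obtain S where S: "S \<in> P" "x \<in> S" using cov[OF P] by blast
      have Ss: "S \<subseteq> space M" using S P sets.sets_into_space unfolding dparts_def by blast
      have "bdd_below (f ` S)" using Ss f01 by (intro bdd_belowI[where m=0]) auto
      then have "c S \<le> f x" unfolding c_def using S(2) by (rule cINF_lower)
      then show "g P x \<le> f x" using gpt[OF P S] by simp
    qed
    then show ?thesis using geq[OF P] by simp
  qed
  have ne: "dparts M \<noteq> {}" using dparts_ne by auto
  have bdd: "bdd_above ((\<lambda>P. \<Sum>B\<in>P. c B * \<nu> B) ` dparts M)"
    using le by (intro bdd_aboveI[where M="integral\<^sup>L N f"]) auto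
  have up: "integral\<^sup>L N f - \<nu> (space M) / real n \<le> (SUP P\<in>dparts M. \<Sum>B\<in>P. c B * \<nu> B)"
    if n: "n > 0" for n :: nat
  proof -
    define Bk where "Bk k = {x\<in>space M. real k \<le> f x * real n \<and> f x * real n < real k + 1}" for k :: nat
    define P where "P = Bk ` {..n}"
    have Bks: "Bk k \<in> sets M" for k unfolding Bk_def using fm by measurable
    have P: "P \<in> dparts M"
      unfolding dparts_def
    proof (intro CollectI conjI)
      show "finite P" unfolding P_def by simp
      show "P \<subseteq> sets M" unfolding P_def using Bks by auto
      show "disjoint P" unfolding P_def pairwise_def disjnt_def
      proof (intro ballI impI)
        fix A B assume A: "A \<in> Bk ` {..n}" and B: "B \<in> Bk ` {..n}" and AB: "A \<noteq> B"
        from A obtain k where k: "A = Bk k" by auto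
        from B obtain l where l: "B = Bk l" by auto
        have "k \<noteq> l" using AB k l by auto
        show "A \<inter> B = {}"
        proof (rule ccontr)
          assume "A \<inter> B \<noteq> {}"
          then obtain x where "x \<in> Bk k" "x \<in> Bk l" using k l by auto
          then have "real k < real l + 1" "real l < real k + 1" unfolding Bk_def by auto
          then have "k = l" by linarith
          then show False using \<open>k \<noteq> l\<close> by simp
        qed
      qed
      show "\<Union>P = space M"
      proof
        show "\<Union>P \<subseteq> space M" unfolding P_def Bk_def by auto
        show "space M \<subseteq> \<Union>P"
        proof
          fix x assume x: "x \<in> space M"
          define k where "k = nat \<lfloor>f x * real n\<rfloor>"
          have fx: "0 \<le> f x * real n" "f x * real n \<le> real n" using f01 x by (auto simp: mult_left_le_one_le)
          have "real k = of_int \<lfloor>f x * real n\<rfloor>" unfolding k_def using fx by simp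
          then have "real k \<le> f x * real n" "f x * real n < real k + 1" by linarith+
          moreover have "k \<le> n" using fx unfolding k_def by (simp add: nat_le_iff floor_le_iff)
          ultimately show "x \<in> \<Union>P" unfolding P_def Bk_def using x by auto
        qed
      qed
    qed
    have gge: "f x - 1 / real n \<le> g P x" if x: "x \<in> space N" for x
    proof -
      have xM: "x \<in> space M" using x Nprops(2) by simp
      then obtain S where S: "S \<in> P" "x \<in> S" using cov[OF P] by blast
      then obtain k where k: "S = Bk k" unfolding P_def by auto
      have "real k / real n \<le> c S"
        unfolding c_def using S(2)
      proof (intro cINF_greatest)
        fix y assume "y \<in> S"
        then have "real k \<le> f y * real n" unfolding k Bk_def by auto
        then show "real k / real n \<le> f y" using n by (simp add: divide_le_eq)
      qed auto
      moreover have "f x * real n < real k + 1" using S(2) unfolding k Bk_def by auto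
      then have "f x < (real k + 1) / real n" using n by (simp add: pos_less_divide_eq)
      then have "f x - 1 / real n < real k / real n" by (simp add: add_divide_distrib)
      ultimately show ?thesis using gpt[OF P S] by simp
    qed
    have "integral\<^sup>L N f - \<nu> (space M) / real n = integral\<^sup>L N (\<lambda>x. f x - 1 / real n)"
      using intf Nprops(4)[of "space M"] Nprops(2) by (simp add: measure_def)
    also have "\<dots> \<le> integral\<^sup>L N (g P)"
      using intf gint[OF P] gge by (intro integral_mono) auto
    also have "\<dots> = (\<Sum>B\<in>P. c B * \<nu> B)" using geq[OF P] by simp
    also have "\<dots> \<le> (SUP P\<in>dparts M. \<Sum>B\<in>P. c B * \<nu> B)"
      by (rule cSUP_upper[OF P bdd])
    finally show ?thesis .
  qed
  have nnX: "0 \<le> \<nu> (space M)" using p unfolding pos_fa_measure_def by auto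
  have "integral\<^sup>L N f \<le> (SUP P\<in>dparts M. \<Sum>B\<in>P. c B * \<nu> B)"
  proof (rule ccontr)
    assume "\<not> ?thesis"
    then have d: "0 < integral\<^sup>L N f - (SUP P\<in>dparts M. \<Sum>B\<in>P. c B * \<nu> B)" (is "0 < ?d") by simp
    obtain n :: nat where n: "\<nu> (space M) / ?d < real n" using reals_Archimedean2 by blast
    have n0: "n > 0" using n d nnX by (cases "n = 0") (auto simp: divide_nonneg_pos leD)
    have "\<nu> (space M) / real n < ?d" using n n0 d by (simp add: field_simps)
    then show False using up[OF n0] by simp
  qed
  moreover have "(SUP P\<in>dparts M. \<Sum>B\<in>P. c B * \<nu> B) \<le> integral\<^sup>L N f"
    using le ne by (intro cSUP_least) auto
  ultimately show ?thesis unfolding fa_integral_dparts N_def c_def by simp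
qed


lemma ca_add2:
  assumes ca: "ca_on M \<mu>" and e: "\<mu> {} = 0" and A: "A \<in> sets M" and B: "B \<in> sets M" and d: "A \<inter> B = {}"
  shows "\<mu> (A \<union> B) = \<mu> A + \<mu> B"
proof -
  define F where "F n = (if n = 0 then A else if n = 1 then B else {})" for n :: nat
  have r: "range F \<subseteq> sets M" using A B unfolding F_def by auto
  have df: "disjoint_family F" using d unfolding F_def disjoint_family_on_def by auto
  have U: "(\<Union>n. F n) = A \<union> B"
  proof
    show "(\<Union>n. F n) \<subseteq> A \<union> B" unfolding F_def by auto
    show "A \<union> B \<subseteq> (\<Union>n. F n)" using F_def by (auto intro!: exI[of _ "0::nat"] exI[of _ "1::nat"]; metis zero_neq_one)
  qed
  have s1: "(\<lambda>n. \<mu> (F n)) sums \<mu> (A \<union> B)" using ca r df U unfolding ca_on_def by metis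
  have s2: "(\<lambda>n. \<mu> (F n)) sums (\<Sum>n\<in>{0,1}. \<mu> (F n))"
    by (rule sums_finite) (auto simp: F_def e)
  have "(\<Sum>n\<in>{0::nat,1}. \<mu> (F n)) = \<mu> A + \<mu> B" unfolding F_def by simp
  then show ?thesis using sums_unique2[OF s1 s2] by simp
qed

lemma tf_props:
  assumes "transition_function M p"
  shows "\<And>x E. x \<in> space M \<Longrightarrow> E \<in> sets M \<Longrightarrow> 0 \<le> p x E \<and> p x E \<le> 1"
    "\<And>x. x \<in> space M \<Longrightarrow> p x (space M) = 1"
    "\<And>E. E \<in> sets M \<Longrightarrow> (\<lambda>x. p x E) \<in> borel_measurable M"
    "\<And>x. x \<in> space M \<Longrightarrow> p x {} = 0"
    "\<And>x. x \<in> space M \<Longrightarrow> ca_on M (p x)"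
  using assms unfolding transition_function_def by auto

lemma markov_ca:
  assumes tf: "transition_function M p" and p: "pos_fa_measure M \<nu>" and ca: "ca_on M \<nu>"
  shows "pos_fa_measure M (markov_op M p \<nu>)" "ca_on M (markov_op M p \<nu>)"
    "markov_op M p \<nu> (space M) = \<nu> (space M)"
proof -
  note T = tf_props[OF tf]
  define N where "N = ca_meas M \<nu>"
  note Nprops = ca_meas[OF p ca, folded N_def]
  interpret finite_measure N by (rule Nprops(5))
  have meas: "(\<lambda>x. p x E) \<in> borel_measurable N" if "E \<in> sets M" for E
    by (subst measurable_cong_sets[OF Nprops(1) refl]) (rule T(3)[OF that])
  have int: "integrable N (\<lambda>x. p x E)" if "E \<in> sets M" for E
    using T(1) that Nprops(2) meas[OF that] by (intro integrable_const_bound[where B=1]) auto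
  have rep: "markov_op M p \<nu> E = integral\<^sup>L N (\<lambda>x. p x E)" if "E \<in> sets M" for E
    unfolding markov_op_def N_def using T(1) that by (intro darboux_eq[OF p ca T(3)[OF that]]) auto
  have nnX: "0 \<le> \<nu> (space M)" using p unfolding pos_fa_measure_def by auto
  have nn: "0 \<le> markov_op M p \<nu> E" if "E \<in> sets M" for E
  proof -
    have "0 \<le> integral\<^sup>L N (\<lambda>x. p x E)"
      by (rule Bochner_Integration.integral_nonneg) (use T(1) that Nprops(2) in auto)
    then show ?thesis using rep[OF that] by simp
  qed
  have le: "markov_op M p \<nu> E \<le> \<nu> (space M)" if "E \<in> sets M" for E
  proof -
    have "integral\<^sup>L N (\<lambda>x. p x E) \<le> integral\<^sup>L N (\<lambda>x. 1)"
      using T(1) that Nprops(2) int[OF that] by (intro Bochner_Integration.integral_mono) auto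
    also have "\<dots> = \<nu> (space M)" using Nprops(4)[of "space M"] Nprops(2) by simp
    finally show ?thesis using rep[OF that] by simp
  qed
  show X: "markov_op M p \<nu> (space M) = \<nu> (space M)"
  proof -
    have "integral\<^sup>L N (\<lambda>x. p x (space M)) = integral\<^sup>L N (\<lambda>x. 1)"
      using T(2) Nprops(2) by (intro Bochner_Integration.integral_cong) auto
    then show ?thesis using rep[of "space M"] Nprops(4)[of "space M"] Nprops(2) by simp
  qed
  have E0: "markov_op M p \<nu> {} = 0"
  proof -
    have "integral\<^sup>L N (\<lambda>x. p x {}) = integral\<^sup>L N (\<lambda>x. 0)"
      using T(4) Nprops(2) by (intro Bochner_Integration.integral_cong) auto
    then show ?thesis using rep[of "{}"] by simp
  qed
  show cam: "ca_on M (markov_op M p \<nu>)"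
    unfolding ca_on_def
  proof (intro allI impI)
    fix F :: "nat \<Rightarrow> 'a set" assume F: "range F \<subseteq> sets M" and dF: "disjoint_family F"
    have U: "(\<Union>n. F n) \<in> sets M" using F by auto
    define s where "s n x = (\<Sum>i<n. p x (F i))" for n x
    have sx: "(\<lambda>i. p x (F i)) sums p x (\<Union>n. F n)" if "x \<in> space M" for x
      using T(5)[OF that] F dF unfolding ca_on_def by auto
    have conv: "AE x in N. (\<lambda>n. s n x) \<longlonglongrightarrow> p x (\<Union>n. F n)"
      using sx Nprops(2) unfolding s_def sums_def by (intro AE_I2) auto
    have bound: "AE x in N. norm (s n x) \<le> 1" for n
    proof (rule AE_I2)
      fix x assume "x \<in> space N"
      then have x: "x \<in> space M" using Nprops(2) by simp
      have nns: "0 \<le> p x (F i)" for i using T(1)[OF x] F by auto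
      have "s n x \<le> (\<Sum>i. p x (F i))" unfolding s_def
        using sx[OF x] nns by (intro sum_le_suminf) (auto simp: sums_summable)
      also have "\<dots> = p x (\<Union>n. F n)" using sx[OF x] by (simp add: sums_iff)
      also have "\<dots> \<le> 1" using T(1)[OF x U] by simp
      finally show "norm (s n x) \<le> 1" using nns unfolding s_def by (simp add: sum_nonneg)
    qed
    have smeas: "s n \<in> borel_measurable N" for n
      unfolding s_def using meas F by (intro borel_measurable_sum) auto
    have lim: "(\<lambda>n. integral\<^sup>L N (s n)) \<longlonglongrightarrow> integral\<^sup>L N (\<lambda>x. p x (\<Union>n. F n))"
      by (rule integral_dominated_convergence[OF meas[OF U] smeas _ conv bound]) simp
    have "integral\<^sup>L N (s n) = (\<Sum>i<n. markov_op M p \<nu> (F i))" for n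
      unfolding s_def using int F rep by (subst Bochner_Integration.integral_sum) auto
    then show "(\<lambda>n. markov_op M p \<nu> (F n)) sums markov_op M p \<nu> (\<Union>n. F n)"
      using lim rep[OF U] unfolding sums_def by simp
  qed
  show "pos_fa_measure M (markov_op M p \<nu>)"
    unfolding pos_fa_measure_def fa_measure_def
  proof (intro conjI)
    show "\<exists>C. \<forall>A\<in>sets M. \<bar>markov_op M p \<nu> A\<bar> \<le> C"
      using nn le by (intro exI[of _ "\<nu> (space M)"]) auto
  qed (use E0 nn ca_add2[OF cam E0] in auto)
qed

lemma markov_mono:
  assumes tf: "transition_function M p" and p\<nu>: "pos_fa_measure M \<nu>" and p\<mu>: "pos_fa_measure M \<mu>"
    and le: "\<forall>A\<in>sets M. \<nu> A \<le> \<mu> A" and E: "E \<in> sets M"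
  shows "markov_op M p \<nu> E \<le> markov_op M p \<mu> E"
  unfolding markov_op_def using tf_props(1)[OF tf _ E]
  by (intro fa_integral_mono[OF p\<nu> p\<mu> le]) auto

lemma not_pure_step:
  assumes tf: "transition_function M p" and p\<mu>: "pos_fa_measure M \<mu>" and p\<mu>': "pos_fa_measure M \<mu>'"
    and np: "\<not> pure_fa M \<mu>" and step: "\<forall>E\<in>sets M. markov_op M p \<mu> E = \<mu>' E"
  shows "\<not> pure_fa M \<mu>'"
proof
  assume pp: "pure_fa M \<mu>'"
  from np p\<mu> obtain \<nu> A where fa: "fa_measure M \<nu>" and ca: "ca_on M \<nu>"
    and le: "\<forall>A\<in>sets M. 0 \<le> \<nu> A \<and> \<nu> A \<le> \<mu> A" and A: "A \<in> sets M" and nz: "\<nu> A \<noteq> 0"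
    unfolding pure_fa_def by blast
  have p\<nu>: "pos_fa_measure M \<nu>" using fa le unfolding pos_fa_measure_def by auto
  have "\<nu> A \<le> \<nu> (space M)" using fa_mono[OF fa _ sets.top A sets.sets_into_space[OF A]] le by auto
  then have pos: "0 < \<nu> (space M)" using nz le A by force
  note L = markov_ca[OF tf p\<nu> ca]
  have "\<forall>E\<in>sets M. 0 \<le> markov_op M p \<nu> E \<and> markov_op M p \<nu> E \<le> \<mu>' E"
  proof
    fix E assume E: "E \<in> sets M"
    have "markov_op M p \<nu> E \<le> markov_op M p \<mu> E"
      using markov_mono[OF tf p\<nu> p\<mu> _ E] le by auto
    then show "0 \<le> markov_op M p \<nu> E \<and> markov_op M p \<nu> E \<le> \<mu>' E"
      using step E L(1) unfolding pos_fa_measure_def by auto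
  qed
  then have "\<forall>E\<in>sets M. markov_op M p \<nu> E = 0"
    using pp L(1,2) unfolding pure_fa_def pos_fa_measure_def by blast
  then show False using L(3) pos by auto
qed


theorem theorem4p3:
  fixes M :: "'a measure" and p :: "'a \<Rightarrow> 'a set \<Rightarrow> real"
    and m :: nat and \<mu> :: "nat \<Rightarrow> 'a set \<Rightarrow> real"
  assumes "std_space M"
    and "transition_function M p"
    and "is_cycle M p m \<mu>"
    and "\<exists>i\<in>{1..m}. pure_fa M (\<mu> i)"
  shows "(\<forall>i\<in>{1..m}. pure_fa M (\<mu> i)) \<and> pure_fa M (mean_measure m \<mu>)"
proof -
  note tf = assms(2)
  have m1: "1 \<le> m" and pf: "\<forall>i\<in>{1..m}. pos_fa_measure M (\<mu> i)"
    and st1: "\<forall>i\<in>{1..<m}. \<forall>E\<in>sets M. markov_op M p (\<mu> i) E = \<mu> (Suc i) E"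
    and stm: "\<forall>E\<in>sets M. markov_op M p (\<mu> m) E = \<mu> 1 E"
    using assms(3) unfolding is_cycle_def by auto
  obtain i0 where i0: "i0 \<in> {1..m}" "pure_fa M (\<mu> i0)" using assms(4) by blast
  define sc where "sc j = (if j < m then Suc j else 1)" for j
  have scm: "sc j \<in> {1..m}" if "j \<in> {1..m}" for j using that m1 unfolding sc_def by auto
  have scstep: "\<forall>E\<in>sets M. markov_op M p (\<mu> j) E = \<mu> (sc j) E" if j: "j \<in> {1..m}" for j
  proof (cases "j < m")
    case True then show ?thesis using st1 j unfolding sc_def by auto
  next
    case False then have "j = m" using j by auto
    then show ?thesis using stm False unfolding sc_def by auto
  qed
  have np: "\<not> pure_fa M (\<mu> (sc j))" if j: "j \<in> {1..m}" and n: "\<not> pure_fa M (\<mu> j)" for j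
    by (rule not_pure_step[OF tf _ _ n scstep[OF j]]) (use pf j scm[OF j] in auto)
  have iter: "(sc ^^ k) j \<in> {1..m} \<and> \<not> pure_fa M (\<mu> ((sc ^^ k) j))"
    if j: "j \<in> {1..m}" and n: "\<not> pure_fa M (\<mu> j)" for j k
  proof (induction k)
    case 0 then show ?case using j n by simp
  next
    case (Suc k) then show ?case using np scm by simp
  qed
  have formula: "(sc ^^ k) j = (j - 1 + k) mod m + 1" if j: "j \<in> {1..m}" for j k
  proof (induction k)
    case 0
    have "j - 1 < m" "1 \<le> j" using j by auto
    then show ?case by simp
  next
    case (Suc k)
    define r where "r = (j - 1 + k) mod m"
    have r: "r < m" unfolding r_def using m1 by simp
    have e: "j - 1 + Suc k = Suc (j - 1 + k)" by simp
    show ?case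
    proof (cases "Suc r = m")
      case True
      then show ?thesis using Suc unfolding e mod_Suc sc_def r_def[symmetric] by simp
    next
      case False
      then show ?thesis using Suc r unfolding e mod_Suc sc_def r_def[symmetric] by simp
    qed
  qed
  have all: "\<forall>i\<in>{1..m}. pure_fa M (\<mu> i)"
  proof (rule ccontr)
    assume "\<not> ?thesis"
    then obtain j where j: "j \<in> {1..m}" and n: "\<not> pure_fa M (\<mu> j)" by blast
    define k where "k = i0 + m - j"
    have "j - 1 + k = (i0 - 1) + m" unfolding k_def using j i0(1) by auto
    then have "(sc ^^ k) j = i0" using formula[OF j, of k] i0(1) by auto
    then show False using iter[OF j n, of k] i0(2) by simp
  qed
  have "pure_fa M (\<lambda>E. (1 / real m) * (\<lambda>E. \<Sum>k=1..m. \<mu> k E) E)"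
    by (rule pure_scale[OF pure_sum[OF all]]) (use m1 in simp)
  then have "pure_fa M (mean_measure m \<mu>)" unfolding mean_measure_def by simp
  then show ?thesis using all by simp
qed

end
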